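(* Let $k$ be a field of characteristic $\neq 2$, let $\mathcal O$ be the Lie algebra described in the context, and let $\mathcal I$ be a maximal (proper) ideal of $\mathcal O$. Then the quotient $\mathcal O/\mathcal I$ is either a one-dimensional Lie algebra over $k$, or a three-dimensional simple Lie algebra over a finite field extension of $k$.
   Context: $\mathcal O$ is the Lie algebra over $k$ which is a free $k[t]$-module with basis $v_0,v_1,v_2$, with $k[t]$-bilinear bracket determined by $[v_0,v_1]=-v_2(t-1)$, $[v_1,v_2]=-v_0$, $[v_2,v_0]=v_1t$ (it is isomorphic to the Onsager algebra, the Lie algebra over $k$ with generators $A,B$ and relations $[A,[A,[A,B]]]=4[A,B]$, $[B,[B,[B,A]]]=4[B,A]$). *)

theory Defs
  imports "HOL-Computational_Algebra.Polynomial" "HOL-Algebra.Embedded_Algebras"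
begin

text \<open>The Lie algebra O over a field k: the free k[t]-module with basis v0, v1, v2.
  An element x0 v0 + x1 v1 + x2 v2 (xi in k[t]) is the triple (x0, x1, x2).\<close>

type_synonym 'a ons = "'a poly \<times> 'a poly \<times> 'a poly"

definition ons_zero :: "'a::field ons" where
  "ons_zero = (0, 0, 0)"

definition ons_add :: "'a::field ons \<Rightarrow> 'a ons \<Rightarrow> 'a ons" where
  "ons_add x y = (case x of (x0, x1, x2) \<Rightarrow> case y of (y0, y1, y2) \<Rightarrow> (x0 + y0, x1 + y1, x2 + y2))"

definition ons_diff :: "'a::field ons \<Rightarrow> 'a ons \<Rightarrow> 'a ons" where
  "ons_diff x y = (case x of (x0, x1, x2) \<Rightarrow> case y of (y0, y1, y2) \<Rightarrow> (x0 - y0, x1 - y1, x2 - y2))"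

definition ons_smul :: "'a::field \<Rightarrow> 'a ons \<Rightarrow> 'a ons" where
  "ons_smul a x = (case x of (x0, x1, x2) \<Rightarrow> (Polynomial.smult a x0, Polynomial.smult a x1, Polynomial.smult a x2))"

text \<open>The k[t]-bilinear bracket determined by
  [v0,v1] = -v2 (t-1), [v1,v2] = -v0, [v2,v0] = v1 t (and skew-symmetry).\<close>
definition ons_bracket :: "'a::field ons \<Rightarrow> 'a ons \<Rightarrow> 'a ons" where
  "ons_bracket x y = (case x of (x0, x1, x2) \<Rightarrow> case y of (y0, y1, y2) \<Rightarrow>
     ( - (x1 * y2 - x2 * y1),
       [:0, 1:] * (x2 * y0 - x0 * y2),
       - ([:-1, 1:] * (x0 * y1 - x1 * y0))))"

definition ons_ideal :: "'a::field ons set \<Rightarrow> bool" where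
  "ons_ideal J \<longleftrightarrow> ons_zero \<in> J
     \<and> (\<forall>x\<in>J. \<forall>y\<in>J. ons_add x y \<in> J)
     \<and> (\<forall>a. \<forall>x\<in>J. ons_smul a x \<in> J)
     \<and> (\<forall>x. \<forall>y\<in>J. ons_bracket x y \<in> J)"

definition ons_maximal_ideal :: "'a::field ons set \<Rightarrow> bool" where
  "ons_maximal_ideal I \<longleftrightarrow> ons_ideal I \<and> I \<noteq> UNIV
     \<and> (\<forall>J. ons_ideal J \<and> I \<subseteq> J \<longrightarrow> J = I \<or> J = UNIV)"

definition quot_one_dim :: "'a::field ons set \<Rightarrow> bool" where
  "quot_one_dim I \<longleftrightarrow> (\<exists>v. v \<notin> I \<and> (\<forall>x. \<exists>c. ons_diff x (ons_smul c v) \<in> I))"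

definition type_field :: "'a::field ring" where
  "type_field = \<lparr>carrier = UNIV, monoid.mult = (*), one = 1, zero = 0, add = (+)\<rparr>"

text \<open>K is an abstract field (HOL-Algebra record) with an embedding iota of k, of finite
  dimension over iota(k); act is a K-action on O/I (given on representatives, well defined
  modulo I) extending the k-action and making the bracket K-bilinear; O/I has K-dimension 3
  and is simple as a Lie algebra over K.  The carrier type (O \<Rightarrow> O) is large enough to
  hold a copy of any such K, since K embeds into the k-linear endomorphisms of O/I.\<close>
definition quot_3dim_simple_over_finite_ext :: "'a::field ons set \<Rightarrow> bool" where
  "quot_3dim_simple_over_finite_ext I \<longleftrightarrow>
    (\<exists>(K :: ('a ons \<Rightarrow> 'a ons) ring) (\<iota> :: 'a \<Rightarrow> ('a ons \<Rightarrow> 'a ons))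
       (act :: ('a ons \<Rightarrow> 'a ons) \<Rightarrow> 'a ons \<Rightarrow> 'a ons).
      field K
      \<and> \<iota> \<in> ring_hom type_field K
      \<and> subfield (range \<iota>) K
      \<and> ring.finite_dimension K (range \<iota>) (carrier K)
      \<comment> \<open>act is a well-defined K-vector space structure on O/I extending the k-structure\<close>
      \<and> (\<forall>c\<in>carrier K. \<forall>x y. ons_diff x y \<in> I \<longrightarrow> ons_diff (act c x) (act c y) \<in> I)
      \<and> (\<forall>c\<in>carrier K. \<forall>x y. ons_diff (act c (ons_add x y)) (ons_add (act c x) (act c y)) \<in> I)
      \<and> (\<forall>c\<in>carrier K. \<forall>d\<in>carrier K. \<forall>x.
            ons_diff (act (c \<oplus>\<^bsub>K\<^esub> d) x) (ons_add (act c x) (act d x)) \<in> I)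
      \<and> (\<forall>c\<in>carrier K. \<forall>d\<in>carrier K. \<forall>x.
            ons_diff (act (c \<otimes>\<^bsub>K\<^esub> d) x) (act c (act d x)) \<in> I)
      \<and> (\<forall>a x. ons_diff (act (\<iota> a) x) (ons_smul a x) \<in> I)
      \<comment> \<open>the bracket of O/I is K-bilinear\<close>
      \<and> (\<forall>c\<in>carrier K. \<forall>x y. ons_diff (ons_bracket (act c x) y) (act c (ons_bracket x y)) \<in> I)
      \<and> (\<forall>c\<in>carrier K. \<forall>x y. ons_diff (ons_bracket x (act c y)) (act c (ons_bracket x y)) \<in> I)
      \<comment> \<open>O/I has dimension 3 over K\<close>
      \<and> (\<exists>e1 e2 e3.
           (\<forall>x. \<exists>c1\<in>carrier K. \<exists>c2\<in>carrier K. \<exists>c3\<in>carrier K.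
               ons_diff x (ons_add (act c1 e1) (ons_add (act c2 e2) (act c3 e3))) \<in> I)
         \<and> (\<forall>c1\<in>carrier K. \<forall>c2\<in>carrier K. \<forall>c3\<in>carrier K.
               ons_add (act c1 e1) (ons_add (act c2 e2) (act c3 e3)) \<in> I
               \<longrightarrow> c1 = \<zero>\<^bsub>K\<^esub> \<and> c2 = \<zero>\<^bsub>K\<^esub> \<and> c3 = \<zero>\<^bsub>K\<^esub>))
      \<comment> \<open>O/I is simple over K: non-abelian, and its only K-ideals are 0 and O/I
          (K-ideals of O/I correspond to ideals J of O containing I and stable under act)\<close>
      \<and> (\<exists>x y. ons_bracket x y \<notin> I)
      \<and> (\<forall>J. ons_ideal J \<and> I \<subseteq> J \<and> (\<forall>c\<in>carrier K. \<forall>x\<in>J. act c x \<in> J)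
             \<longrightarrow> J = I \<or> J = UNIV))"

end

theory Submission
  imports Defs
begin


definition pmul :: "'a::field poly \<Rightarrow> 'a ons \<Rightarrow> 'a ons" where
  "pmul p x = (case x of (a, b, c) \<Rightarrow> (p * a, p * b, p * c))"

definition Op :: "'a::field ons set" where
  "Op = {(a, [:0, 1:] * b, [:-1, 1:] * c) | a b c. True}"

lemma ons_simps [simp]:
  "ons_add (a, b, c) (d, e, f) = (a + d, b + e, c + f)"
  "ons_diff (a, b, c) (d, e, f) = (a - d, b - e, c - f)"
  "ons_smul r (a, b, c) = (Polynomial.smult r a, Polynomial.smult r b, Polynomial.smult r c)"
  "pmul p (a, b, c) = (p * a, p * b, p * c)"
  "ons_bracket (a, b, c) (d, e, f) = (- (b * f - c * e), [:0, 1:] * (c * d - a * f), - ([:-1, 1:] * (a * e - b * d)))"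
  "ons_zero = (0, 0, 0)"
  by (simp_all add: ons_add_def ons_diff_def ons_smul_def pmul_def ons_bracket_def ons_zero_def)

lemma br_in_Op: "ons_bracket x y \<in> Op"
proof -
  obtain a b c where x: "x = (a, b, c)" by (cases x) auto
  obtain d e f where y: "y = (d, e, f)" by (cases y) auto
  show ?thesis unfolding x y Op_def
    by (rule CollectI, rule exI[of _ "- (b * f - c * e)"], rule exI[of _ "c * d - a * f"],
        rule exI[of _ "- (a * e - b * d)"]) simp
qed

lemma Op_sum_br:
  "(a, [:0, 1:] * b, [:-1, 1:] * c) = ons_add (ons_bracket (0, 1, 0) (0, 0, - a))
      (ons_add (ons_bracket (0, 0, 1) (b, 0, 0)) (ons_bracket (0, 1, 0) (c, 0, 0)))"
  by (simp add: algebra_simps)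

context
  fixes I :: "'a::field ons set"
  assumes idl: "ons_ideal I"
begin

lemma I_zero: "(0, 0, 0) \<in> I"
  using idl unfolding ons_ideal_def by simp

lemma I_add: "x \<in> I \<Longrightarrow> y \<in> I \<Longrightarrow> ons_add x y \<in> I"
  using idl unfolding ons_ideal_def by blast

lemma I_smul: "x \<in> I \<Longrightarrow> ons_smul r x \<in> I"
  using idl unfolding ons_ideal_def by blast

lemma I_br: "y \<in> I \<Longrightarrow> ons_bracket x y \<in> I"
  using idl unfolding ons_ideal_def by blast

lemma I_diff: "x \<in> I \<Longrightarrow> y \<in> I \<Longrightarrow> ons_diff x y \<in> I"
proof -
  assume "x \<in> I" "y \<in> I"
  then have "ons_add x (ons_smul (-1) y) \<in> I" using I_add I_smul by blast
  moreover have "ons_add x (ons_smul (-1) y) = ons_diff x y"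
    by (cases x, cases y) auto
  ultimately show ?thesis by simp
qed

end

lemma caseA:
  fixes I :: "'a::field ons set"
  assumes max: "ons_maximal_ideal I" and OpI: "Op \<subseteq> I"
  shows "quot_one_dim I"
proof -
  have idl: "ons_ideal I" and ne: "I \<noteq> UNIV"
    and mx: "\<And>J. ons_ideal J \<Longrightarrow> I \<subseteq> J \<Longrightarrow> J = I \<or> J = UNIV"
    using max unfolding ons_maximal_ideal_def by auto
  obtain v where v: "v \<notin> I" using ne by auto
  define J where "J = {y. \<exists>c. ons_diff y (ons_smul c v) \<in> I}"
  have zI: "ons_diff y (ons_smul 0 v) \<in> I" if "y \<in> I" for y
    using that by (cases y, cases v) auto
  have "ons_ideal J"
    unfolding ons_ideal_def
  proof (intro conjI ballI allI)
    show "ons_zero \<in> J" unfolding J_def using zI[OF I_zero[OF idl]] by auto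
  next
    fix x y assume "x \<in> J" "y \<in> J"
    then obtain c d where c: "ons_diff x (ons_smul c v) \<in> I" and d: "ons_diff y (ons_smul d v) \<in> I"
      unfolding J_def by auto
    have "ons_diff (ons_add x y) (ons_smul (c + d) v) = ons_add (ons_diff x (ons_smul c v)) (ons_diff y (ons_smul d v))"
      by (cases x, cases y, cases v) (simp add: algebra_simps smult_add_left)
    then show "ons_add x y \<in> J" unfolding J_def using I_add[OF idl c d] by (auto intro!: exI[of _ "c + d"])
  next
    fix a x assume "x \<in> J"
    then obtain c where c: "ons_diff x (ons_smul c v) \<in> I" unfolding J_def by auto
    have "ons_diff (ons_smul a x) (ons_smul (a * c) v) = ons_smul a (ons_diff x (ons_smul c v))"
      by (cases x, cases v) (simp add: algebra_simps smult_diff_right)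
    then show "ons_smul a x \<in> J" unfolding J_def using I_smul[OF idl c] by (auto intro!: exI[of _ "a * c"])
  next
    fix x y assume "y \<in> J"
    have "ons_bracket x y \<in> I" using br_in_Op OpI by blast
    then show "ons_bracket x y \<in> J" unfolding J_def using zI by blast
  qed
  moreover have "I \<subseteq> J" unfolding J_def using zI by blast
  moreover have "v \<in> J" unfolding J_def using I_zero[OF idl]
    by (cases v) (auto intro!: exI[of _ 1])
  ultimately have "J = UNIV" using mx v by blast
  then show ?thesis unfolding quot_one_dim_def J_def using v by blast
qed



lemma pmul_add: "pmul p (ons_add x y) = ons_add (pmul p x) (pmul p y)"
  by (cases x, cases y) (simp add: algebra_simps)
lemma pmul_smul: "pmul p (ons_smul a x) = ons_smul a (pmul p x)"
  by (cases x) simp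
lemma pmul_br: "pmul p (ons_bracket x y) = ons_bracket x (pmul p y)"
  by (cases x, cases y) (simp add: algebra_simps)
lemma br_pmul_swap: "ons_bracket x (pmul p y) = ons_bracket (pmul p x) y"
  by (cases x, cases y) (simp add: algebra_simps)
lemma br_add: "ons_bracket x (ons_add y z) = ons_add (ons_bracket x y) (ons_bracket x z)"
  by (cases x, cases y, cases z) (simp add: algebra_simps)
lemma pmul_pmul: "pmul p (pmul r x) = pmul (p * r) x"
  by (cases x) (simp add: algebra_simps)
lemma add_zero_r: "ons_add x (0, 0, 0) = x"
  by (cases x) simp
lemma add_zero_l: "ons_add (0, 0, 0) x = x"
  by (cases x) simp
lemma pmul_zero: "pmul p (0, 0, 0) = (0, 0, 0)"
  by simp

context
  fixes I :: "'a::field ons set"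
  assumes max: "ons_maximal_ideal I" and nOp: "\<not> Op \<subseteq> I"
begin

lemma idl: "ons_ideal I" and ne: "I \<noteq> UNIV"
  and mx: "\<And>J. ons_ideal J \<Longrightarrow> I \<subseteq> J \<Longrightarrow> J = I \<or> J = UNIV"
  using max unfolding ons_maximal_ideal_def by auto

lemma all_br_not: "\<not> (\<forall>x z. ons_bracket x z \<in> I)"
proof
  assume H: "\<forall>x z. ons_bracket x z \<in> I"
  have "Op \<subseteq> I"
  proof
    fix ob :: "'a ons" assume "ob \<in> Op"
    then obtain a b c where "ob = (a, [:0, 1:] * b, [:-1, 1:] * c)" unfolding Op_def by blast
    then have "ob = ons_add (ons_bracket (0, 1, 0) (0, 0, - a))
      (ons_add (ons_bracket (0, 0, 1) (b, 0, 0)) (ons_bracket (0, 1, 0) (c, 0, 0)))"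
      using Op_sum_br[of a b c] by (rule trans)
    then show "ob \<in> I" using H by (auto intro!: I_add[OF idl] simp del: ons_simps)
  qed
  with nOp show False by simp
qed

lemma pmulI: "y \<in> I \<Longrightarrow> pmul p y \<in> I"
proof (rule ccontr)
  assume y: "y \<in> I" and ny: "pmul p y \<notin> I"
  define J where "J = {z. \<exists>i\<in>I. \<exists>j\<in>I. z = ons_add i (pmul p j)}"
  have IJ: "w \<in> J" if "w \<in> I" for w
    unfolding J_def mem_Collect_eq
    by (rule bexI[where x=w], rule bexI[where x="(0,0,0)"], simp add: add_zero_r, rule I_zero[OF idl], rule that)
  have "ons_ideal J"
    unfolding ons_ideal_def
  proof (intro conjI ballI allI)
    show "ons_zero \<in> J" using IJ I_zero[OF idl] by simp
  next
    fix x z assume "x \<in> J" "z \<in> J"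
    then obtain i j i' j' where "i \<in> I" "j \<in> I" "i' \<in> I" "j' \<in> I"
      and "x = ons_add i (pmul p j)" "z = ons_add i' (pmul p j')" unfolding J_def by blast
    moreover have "ons_add (ons_add i (pmul p j)) (ons_add i' (pmul p j')) =
        ons_add (ons_add i i') (pmul p (ons_add j j'))"
      by (cases i, cases j, cases i', cases j') (simp add: algebra_simps)
    ultimately have E: "ons_add x z = ons_add (ons_add i i') (pmul p (ons_add j j'))" by simp
    show "ons_add x z \<in> J" unfolding J_def mem_Collect_eq
      by (rule bexI[where x="ons_add i i'"], rule bexI[where x="ons_add j j'"], rule E,
          rule I_add[OF idl \<open>j \<in> I\<close> \<open>j' \<in> I\<close>], rule I_add[OF idl \<open>i \<in> I\<close> \<open>i' \<in> I\<close>])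
  next
    fix a x assume "x \<in> J"
    then obtain i j where "i \<in> I" "j \<in> I" and "x = ons_add i (pmul p j)" unfolding J_def by blast
    moreover have "ons_smul a (ons_add i (pmul p j)) = ons_add (ons_smul a i) (pmul p (ons_smul a j))"
      by (cases i, cases j) (simp add: algebra_simps smult_add_right)
    ultimately have E: "ons_smul a x = ons_add (ons_smul a i) (pmul p (ons_smul a j))" by simp
    show "ons_smul a x \<in> J" unfolding J_def mem_Collect_eq
      by (rule bexI[where x="ons_smul a i"], rule bexI[where x="ons_smul a j"], rule E,
          rule I_smul[OF idl \<open>j \<in> I\<close>], rule I_smul[OF idl \<open>i \<in> I\<close>])
  next
    fix x z assume "z \<in> J"
    then obtain i j where "i \<in> I" "j \<in> I" and "z = ons_add i (pmul p j)" unfolding J_def by blast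
    then have "ons_bracket x z = ons_add (ons_bracket x i) (ons_bracket (pmul p x) j)"
      by (simp add: br_add br_pmul_swap)
    then have "ons_bracket x z \<in> I" using I_add[OF idl] I_br[OF idl] \<open>i \<in> I\<close> \<open>j \<in> I\<close> by simp
    then show "ons_bracket x z \<in> J" using IJ by simp
  qed
  moreover have "I \<subseteq> J" using IJ by blast
  moreover have "pmul p y \<in> J" unfolding J_def mem_Collect_eq
    by (rule bexI[where x="(0,0,0)"], rule bexI[where x=y], simp add: add_zero_l, rule y, rule I_zero[OF idl])
  ultimately have J: "J = UNIV" using mx ny by blast
  have "ons_bracket x z \<in> I" for x z
  proof -
    have "z \<in> J" using J by simp
    then obtain i j where "i \<in> I" "j \<in> I" and "z = ons_add i (pmul p j)" unfolding J_def by blast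
    then have "ons_bracket x z = ons_add (ons_bracket x i) (ons_bracket (pmul p x) j)"
      by (simp add: br_add br_pmul_swap)
    then show ?thesis using I_add[OF idl] I_br[OF idl] \<open>i \<in> I\<close> \<open>j \<in> I\<close> by simp
  qed
  then show False using all_br_not by blast
qed

lemma IOp: "\<exists>i\<in>I. \<exists>ob\<in>Op. x = ons_add i ob"
proof -
  define J where "J = {z. \<exists>i\<in>I. \<exists>ob\<in>Op. z = ons_add i ob}"
  have Op0: "(0, 0, 0) \<in> (Op :: 'a ons set)" unfolding Op_def by (auto intro!: exI[of _ 0])
  have Opadd: "ons_add ob ob' \<in> Op" if A: "ob \<in> Op" "ob' \<in> Op" for ob ob' :: "'a ons"
  proof -
    obtain a b c a' b' c' where "ob = (a, [:0, 1:] * b, [:-1, 1:] * c)" "ob' = (a', [:0, 1:] * b', [:-1, 1:] * c')"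
      using A unfolding Op_def by blast
    then show ?thesis unfolding Op_def
      by (auto intro!: exI[of _ "a + a'"] exI[of _ "b + b'"] exI[of _ "c + c'"] simp: algebra_simps)
  qed
  have Opsmul: "ons_smul r ob \<in> Op" if A: "ob \<in> Op" for ob :: "'a ons" and r
  proof -
    obtain a b c where "ob = (a, [:0, 1:] * b, [:-1, 1:] * c)"
      using A unfolding Op_def by blast
    then show ?thesis unfolding Op_def
      by (auto intro!: exI[of _ "Polynomial.smult r a"] exI[of _ "Polynomial.smult r b"] exI[of _ "Polynomial.smult r c"] simp: smult_diff_right)
  qed
  have "ons_ideal J"
    unfolding ons_ideal_def
  proof (intro conjI ballI allI)
    show "ons_zero \<in> J" unfolding J_def mem_Collect_eq
      by (rule bexI[where x="(0,0,0)"], rule bexI[where x="(0,0,0)"], simp, rule Op0, rule I_zero[OF idl])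
  next
    fix x z assume "x \<in> J" "z \<in> J"
    then obtain i j i' j' where "i \<in> I" "j \<in> Op" "i' \<in> I" "j' \<in> Op"
      and "x = ons_add i j" "z = ons_add i' j'" unfolding J_def by blast
    moreover have "ons_add (ons_add i j) (ons_add i' j') = ons_add (ons_add i i') (ons_add j j')"
      by (cases i, cases j, cases i', cases j') (simp add: algebra_simps)
    ultimately have E: "ons_add x z = ons_add (ons_add i i') (ons_add j j')" by simp
    show "ons_add x z \<in> J" unfolding J_def mem_Collect_eq
      by (rule bexI[where x="ons_add i i'"], rule bexI[where x="ons_add j j'"], rule E,
          rule Opadd[OF \<open>j \<in> Op\<close> \<open>j' \<in> Op\<close>], rule I_add[OF idl \<open>i \<in> I\<close> \<open>i' \<in> I\<close>])
  next
    fix a x assume "x \<in> J"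
    then obtain i j where "i \<in> I" "j \<in> Op" and "x = ons_add i j" unfolding J_def by blast
    moreover have "ons_smul a (ons_add i j) = ons_add (ons_smul a i) (ons_smul a j)"
      by (cases i, cases j) (simp add: algebra_simps smult_add_right)
    ultimately have E: "ons_smul a x = ons_add (ons_smul a i) (ons_smul a j)" by simp
    show "ons_smul a x \<in> J" unfolding J_def mem_Collect_eq
      by (rule bexI[where x="ons_smul a i"], rule bexI[where x="ons_smul a j"], rule E,
          rule Opsmul[OF \<open>j \<in> Op\<close>], rule I_smul[OF idl \<open>i \<in> I\<close>])
  next
    fix x z
    show "ons_bracket x z \<in> J" unfolding J_def mem_Collect_eq
      by (rule bexI[where x="(0,0,0)"], rule bexI[where x="ons_bracket x z"], simp add: add_zero_l,
          rule br_in_Op, rule I_zero[OF idl])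
  qed
  moreover have "I \<subseteq> J"
  proof
    fix w assume "w \<in> I"
    show "w \<in> J" unfolding J_def mem_Collect_eq
      by (rule bexI[where x=w], rule bexI[where x="(0,0,0)"], simp add: add_zero_r, rule Op0, rule \<open>w \<in> I\<close>)
  qed
  moreover have "J \<noteq> I"
  proof -
    obtain ob where "ob \<in> Op" "ob \<notin> I" using nOp by auto
    moreover have "ob \<in> J" unfolding J_def mem_Collect_eq
      by (rule bexI[where x="(0,0,0)"], rule bexI[where x=ob], simp add: add_zero_l, rule \<open>ob \<in> Op\<close>, rule I_zero[OF idl])
    ultimately show ?thesis by auto
  qed
  ultimately have "J = UNIV" using mx by blast
  then show ?thesis unfolding J_def by blast
qed

lemma colon: "(\<forall>x. pmul g x \<in> I) \<or> (\<forall>z. pmul g z \<in> I \<longrightarrow> z \<in> I)"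
proof -
  define C where "C = {z. pmul g z \<in> I}"
  have Cm: "z \<in> C \<longleftrightarrow> pmul g z \<in> I" for z unfolding C_def by simp
  have "ons_ideal C"
    unfolding ons_ideal_def
  proof (intro conjI ballI allI)
    show "ons_zero \<in> C" unfolding Cm using I_zero[OF idl] by simp
  next
    fix x y assume "x \<in> C" "y \<in> C"
    then show "ons_add x y \<in> C" unfolding Cm pmul_add by (rule I_add[OF idl])
  next
    fix a x assume "x \<in> C"
    then show "ons_smul a x \<in> C" unfolding Cm pmul_smul by (rule I_smul[OF idl])
  next
    fix x y assume "y \<in> C"
    then show "ons_bracket x y \<in> C" unfolding Cm pmul_br by (rule I_br[OF idl])
  qed
  moreover have "I \<subseteq> C" unfolding C_def using pmulI by blast
  ultimately have "C = I \<or> C = UNIV" using mx by blast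
  then show ?thesis unfolding C_def by (auto simp del: ons_simps)
qed

lemma genr: "(\<forall>x. pmul g x \<in> I) \<or> (\<forall>x. \<exists>i\<in>I. \<exists>w. x = ons_add i (pmul g w))"
proof -
  define J where "J = {z. \<exists>i\<in>I. \<exists>w. z = ons_add i (pmul g w)}"
  have IJ: "w \<in> J" if "w \<in> I" for w
    unfolding J_def mem_Collect_eq
    by (rule bexI[where x=w], rule exI[where x="(0,0,0)"], simp add: add_zero_r, rule that)
  have "ons_ideal J"
    unfolding ons_ideal_def
  proof (intro conjI ballI allI)
    show "ons_zero \<in> J" using IJ I_zero[OF idl] by simp
  next
    fix x z assume "x \<in> J" "z \<in> J"
    then obtain i j i' j' where "i \<in> I" "i' \<in> I"
      and "x = ons_add i (pmul g j)" "z = ons_add i' (pmul g j')" unfolding J_def by blast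
    moreover have "ons_add (ons_add i (pmul g j)) (ons_add i' (pmul g j')) =
        ons_add (ons_add i i') (pmul g (ons_add j j'))"
      by (cases i, cases j, cases i', cases j') (simp add: algebra_simps)
    ultimately have E: "ons_add x z = ons_add (ons_add i i') (pmul g (ons_add j j'))" by simp
    show "ons_add x z \<in> J" unfolding J_def mem_Collect_eq
      by (rule bexI[where x="ons_add i i'"], rule exI[where x="ons_add j j'"], rule E,
          rule I_add[OF idl \<open>i \<in> I\<close> \<open>i' \<in> I\<close>])
  next
    fix a x assume "x \<in> J"
    then obtain i j where "i \<in> I" and "x = ons_add i (pmul g j)" unfolding J_def by blast
    moreover have "ons_smul a (ons_add i (pmul g j)) = ons_add (ons_smul a i) (pmul g (ons_smul a j))"
      by (cases i, cases j) (simp add: algebra_simps smult_add_right)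
    ultimately have E: "ons_smul a x = ons_add (ons_smul a i) (pmul g (ons_smul a j))" by simp
    show "ons_smul a x \<in> J" unfolding J_def mem_Collect_eq
      by (rule bexI[where x="ons_smul a i"], rule exI[where x="ons_smul a j"], rule E,
          rule I_smul[OF idl \<open>i \<in> I\<close>])
  next
    fix x z assume "z \<in> J"
    then obtain i j where "i \<in> I" and "z = ons_add i (pmul g j)" unfolding J_def by blast
    then have Eb: "ons_bracket x z = ons_add (ons_bracket x i) (pmul g (ons_bracket x j))"
      by (simp add: br_add pmul_br)
    show "ons_bracket x z \<in> J" unfolding J_def mem_Collect_eq
      by (rule bexI[where x="ons_bracket x i"], rule exI[where x="ons_bracket x j"], rule Eb,
          rule I_br[OF idl \<open>i \<in> I\<close>])
  qed
  moreover have "I \<subseteq> J" using IJ by blast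
  ultimately have "J = I \<or> J = UNIV" using mx by blast
  then show ?thesis
  proof
    assume "J = I"
    have "pmul g x \<in> I" for x
    proof -
      have "pmul g x \<in> J" unfolding J_def mem_Collect_eq
        by (rule bexI[where x="(0,0,0)"], rule exI[where x=x], simp add: add_zero_l, rule I_zero[OF idl])
      then show ?thesis using \<open>J = I\<close> by simp
    qed
    then show ?thesis by simp
  next
    assume "J = UNIV" then show ?thesis unfolding J_def by blast
  qed
qed

end



context
  fixes I :: "'a::field ons set"
  assumes max: "ons_maximal_ideal I" and nOp: "\<not> Op \<subseteq> I"
begin

lemma existsA: "\<exists>f. f \<noteq> 0 \<and> (\<forall>x. pmul f x \<in> I)"
proof -
  obtain i ob where i: "i \<in> I" and ob: "ob \<in> Op" and e: "(0, 1, 0) = ons_add i ob"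
    using IOp[OF max nOp] by blast
  obtain i0 i1 i2 where ii: "i = (i0, i1, i2)" by (cases i) auto
  obtain a b c where obe: "ob = (a, [:0, 1:] * b, [:-1, 1:] * c)" using ob unfolding Op_def by blast
  have i1: "i1 + [:0, 1:] * b = 1" using e unfolding ii obe by simp
  have i1nz: "i1 \<noteq> 0"
  proof
    assume "i1 = 0"
    then have "Polynomial.coeff ([:0, 1:] * b) 0 = Polynomial.coeff 1 0" using i1 by simp
    then show False by simp
  qed
  define g where "g = [:-1, 1:] * i1"
  have w0: "(g, 0, 0) \<in> I"
  proof -
    have "ons_bracket (0, 1, 0) (ons_bracket (1, 0, 0) i) \<in> I"
      using I_br[OF idl[OF max nOp]] i by blast
    moreover have "ons_bracket (0, 1, 0) (ons_bracket (1, 0, 0) i) = (g, 0, 0)"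
      unfolding ii g_def by (simp add: algebra_simps)
    ultimately show ?thesis by simp
  qed
  have w1: "(0, [:0, 1:] * g, 0) \<in> I"
  proof -
    have "ons_bracket (0, 0, 1) (g, 0, 0) \<in> I" using I_br[OF idl[OF max nOp]] w0 by blast
    moreover have "ons_bracket (0, 0, 1) (g, 0, 0) = (0, [:0, 1:] * g, 0)" by simp
    ultimately show ?thesis by simp
  qed
  have w2: "(0, 0, [:-1, 1:] * g) \<in> I"
  proof -
    have "ons_bracket (0, 1, 0) (g, 0, 0) \<in> I" using I_br[OF idl[OF max nOp]] w0 by blast
    moreover have "ons_bracket (0, 1, 0) (g, 0, 0) = (0, 0, [:-1, 1:] * g)" by (simp add: algebra_simps)
    ultimately show ?thesis by simp
  qed
  define f where "f = [:0, 1:] * [:-1, 1:] * g"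
  have "f \<noteq> 0" using i1nz by (simp only: f_def g_def mult_eq_0_iff) simp
  moreover have "pmul f x \<in> I" for x
  proof -
    obtain x0 x1 x2 where xx: "x = (x0, x1, x2)" by (cases x) auto
    have "pmul f x = ons_add (pmul (x0 * [:0, 1:] * [:-1, 1:]) (g, 0, 0))
        (ons_add (pmul (x1 * [:-1, 1:]) (0, [:0, 1:] * g, 0)) (pmul (x2 * [:0, 1:]) (0, 0, [:-1, 1:] * g)))"
      unfolding xx f_def by (simp add: algebra_simps)
    then show ?thesis
      by (simp only:) (intro I_add[OF idl[OF max nOp]] pmulI[OF max nOp] w0 w1 w2)
  qed
  ultimately show ?thesis by blast
qed


lemma pmul_rem: "g = s * q + r \<Longrightarrow> pmul r x = ons_add (pmul g x) (pmul (- s) (pmul q x))"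
  by (cases x) (simp add: algebra_simps)

lemma IA: "x \<in> I \<Longrightarrow> y \<in> I \<Longrightarrow> ons_add x y \<in> I" using I_add[OF idl[OF max nOp]] .
lemma IB: "y \<in> I \<Longrightarrow> ons_bracket x y \<in> I" using I_br[OF idl[OF max nOp]] .
lemma ID: "x \<in> I \<Longrightarrow> y \<in> I \<Longrightarrow> ons_diff x y \<in> I" using I_diff[OF idl[OF max nOp]] .
lemma IP: "y \<in> I \<Longrightarrow> pmul p y \<in> I" using pmulI[OF max nOp] .

context
  fixes q :: "'a poly"
  assumes qnz: "q \<noteq> 0" and qA: "\<forall>x. pmul q x \<in> I"
    and qmin: "\<And>f. f \<noteq> 0 \<Longrightarrow> (\<forall>x. pmul f x \<in> I) \<Longrightarrow> degree q \<le> degree f"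
begin

lemma A_iff: "(\<forall>x. pmul g x \<in> I) \<longleftrightarrow> q dvd g"
proof
  assume H: "\<forall>x. pmul g x \<in> I"
  have "pmul (g mod q) x \<in> I" for x
  proof -
    have "pmul (g mod q) x = ons_add (pmul g x) (pmul (- (g div q)) (pmul q x))"
      by (rule pmul_rem) (simp add: div_mult_mod_eq)
    then show ?thesis by (simp only:) (intro IA IP H[rule_format] qA[rule_format])
  qed
  then have "g mod q = 0"
    using qmin[of "g mod q"] degree_mod_less[OF qnz, of g] by force
  then show "q dvd g" by (simp add: mod_eq_0_iff_dvd)
next
  assume "q dvd g"
  then obtain s where "g = q * s" by (auto elim: dvdE)
  then have "pmul g x = pmul s (pmul q x)" for x by (cases x) (simp add: algebra_simps)
  then show "\<forall>x. pmul g x \<in> I" by (simp only:) (intro allI IP qA[rule_format])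
qed

lemma not_dvd1: "\<not> q dvd 1"
proof
  assume "q dvd 1"
  then have P: "\<forall>x. pmul 1 x \<in> I" using A_iff by blast
  have "x \<in> I" for x :: "'a ons"
  proof -
    have "pmul 1 x \<in> I" using P by blast
    moreover have "pmul 1 x = x" by (cases x) simp
    ultimately show ?thesis by simp
  qed
  then have "I = UNIV" by blast
  then show False using ne[OF max nOp] by simp
qed

lemma cancel: "\<not> q dvd g \<Longrightarrow> pmul g z \<in> I \<Longrightarrow> z \<in> I"
  using colon[OF max nOp, of g] A_iff by blast

lemma v0_dvd: "pmul g (1, 0, 0) \<in> I \<Longrightarrow> q dvd g"
proof (rule ccontr)
  assume H: "pmul g (1, 0, 0) \<in> I" and nd: "\<not> q dvd g"
  have v: "(1, 0, 0) \<in> I" using cancel[OF nd H] .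
  have "Op \<subseteq> I"
  proof
    fix ob :: "'a ons" assume "ob \<in> Op"
    then obtain a b c where obe: "ob = (a, [:0, 1:] * b, [:-1, 1:] * c)" unfolding Op_def by blast
    have "ob = ons_add (pmul a (1, 0, 0)) (ons_add (pmul b (ons_bracket (0, 0, 1) (1, 0, 0)))
         (pmul c (ons_bracket (0, 1, 0) (1, 0, 0))))"
      unfolding obe by (simp add: algebra_simps)
    then show "ob \<in> I" by (simp only:) (intro IA IP IB v)
  qed
  then show False using nOp by simp
qed

lemma not_dvd_t: "\<not> q dvd [:0, 1:]"
proof
  assume qt: "q dvd [:0, 1:]"
  obtain i ob where i: "i \<in> I" and ob: "ob \<in> Op" and e: "(0, 1, 0) = ons_add i ob"
    using IOp[OF max nOp] by blast
  obtain i0 i1 i2 where ii: "i = (i0, i1, i2)" by (cases i) auto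
  obtain a b c where obe: "ob = (a, [:0, 1:] * b, [:-1, 1:] * c)" using ob unfolding Op_def by blast
  have i1: "i1 + [:0, 1:] * b = 1" using e unfolding ii obe by simp
  have "ons_bracket (0, 0, 1) i \<in> I" using IB i .
  moreover have "pmul [:0, 1:] (0, i0, 0) \<in> I" using qt A_iff by blast
  ultimately have "ons_diff (ons_bracket (0, 0, 1) i) (pmul [:0, 1:] (0, i0, 0)) \<in> I" by (rule ID)
  moreover have "ons_diff (ons_bracket (0, 0, 1) i) (pmul [:0, 1:] (0, i0, 0)) = pmul i1 (1, 0, 0)"
    unfolding ii by (simp add: algebra_simps)
  ultimately have "pmul i1 (1, 0, 0) \<in> I" by simp
  then have "q dvd i1" by (rule v0_dvd)
  have "q dvd i1 + [:0, 1:] * b" by (rule dvd_add[OF \<open>q dvd i1\<close> dvd_mult2[OF qt]])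
  then have "q dvd 1" unfolding i1 .
  then show False using not_dvd1 by simp
qed

lemma not_dvd_t1: "\<not> q dvd [:-1, 1:]"
proof
  assume qt: "q dvd [:-1, 1:]"
  obtain i ob where i: "i \<in> I" and ob: "ob \<in> Op" and e: "(0, 0, 1) = ons_add i ob"
    using IOp[OF max nOp] by blast
  obtain i0 i1 i2 where ii: "i = (i0, i1, i2)" by (cases i) auto
  obtain a b c where obe: "ob = (a, [:0, 1:] * b, [:-1, 1:] * c)" using ob unfolding Op_def by blast
  have i2: "i2 + [:-1, 1:] * c = 1" using e unfolding ii obe by simp
  have "ons_bracket (0, 1, 0) i \<in> I" using IB i .
  moreover have "pmul [:-1, 1:] (0, 0, i0) \<in> I" using qt A_iff by blast
  ultimately have "ons_diff (ons_bracket (0, 1, 0) i) (pmul [:-1, 1:] (0, 0, i0)) \<in> I" by (rule ID)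
  moreover have "ons_diff (ons_bracket (0, 1, 0) i) (pmul [:-1, 1:] (0, 0, i0)) = pmul (- i2) (1, 0, 0)"
    unfolding ii by (simp add: algebra_simps)
  ultimately have "pmul (- i2) (1, 0, 0) \<in> I" by simp
  then have "q dvd - i2" by (rule v0_dvd)
  then have "q dvd i2" by simp
  have "q dvd i2 + [:-1, 1:] * c" by (rule dvd_add[OF \<open>q dvd i2\<close> dvd_mult2[OF qt]])
  then have "q dvd 1" unfolding i2 .
  then show False using not_dvd1 by simp
qed

lemma memI: "(a, b, c) \<in> I \<longleftrightarrow> q dvd a \<and> q dvd b \<and> q dvd c"
proof
  assume y: "(a, b, c) \<in> I"
  have "ons_bracket (0, 1, 0) (ons_bracket (1, 0, 0) (a, b, c)) \<in> I" using y by (intro IB)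
  moreover have "ons_bracket (0, 1, 0) (ons_bracket (1, 0, 0) (a, b, c)) = pmul [:-1, 1:] (pmul b (1, 0, 0))"
    by (simp add: algebra_simps)
  ultimately have "pmul [:-1, 1:] (pmul b (1, 0, 0)) \<in> I" by simp
  then have "q dvd b" by (rule v0_dvd[OF cancel[OF not_dvd_t1]])
  have "ons_bracket (0, 0, 1) (ons_bracket (1, 0, 0) (a, b, c)) \<in> I" using y by (intro IB)
  moreover have "ons_bracket (0, 0, 1) (ons_bracket (1, 0, 0) (a, b, c)) = pmul [:0, 1:] (pmul (- c) (1, 0, 0))"
    by (simp add: algebra_simps)
  ultimately have "pmul [:0, 1:] (pmul (- c) (1, 0, 0)) \<in> I" by simp
  then have "q dvd - c" by (rule v0_dvd[OF cancel[OF not_dvd_t]])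
  have "ons_bracket (0, 0, 1) (ons_bracket (1, 0, 0) (ons_bracket (0, 1, 0) (a, b, c))) \<in> I" using y by (intro IB)
  moreover have "ons_bracket (0, 0, 1) (ons_bracket (1, 0, 0) (ons_bracket (0, 1, 0) (a, b, c)))
      = pmul [:0, 1:] (pmul [:-1, 1:] (pmul (- a) (1, 0, 0)))"
    by (simp add: algebra_simps)
  ultimately have "pmul [:0, 1:] (pmul [:-1, 1:] (pmul (- a) (1, 0, 0))) \<in> I" by simp
  then have "q dvd - a" by (rule v0_dvd[OF cancel[OF not_dvd_t1 cancel[OF not_dvd_t]]])
  show "q dvd a \<and> q dvd b \<and> q dvd c" using \<open>q dvd - a\<close> \<open>q dvd b\<close> \<open>q dvd - c\<close> by simp
next
  assume "q dvd a \<and> q dvd b \<and> q dvd c"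
  then have "q dvd a" "q dvd b" "q dvd c" by blast+
  obtain a' where "a = q * a'" using \<open>q dvd a\<close> by (rule dvdE)
  obtain b' where "b = q * b'" using \<open>q dvd b\<close> by (rule dvdE)
  obtain c' where "c = q * c'" using \<open>q dvd c\<close> by (rule dvdE)
  have "(a, b, c) = pmul q (a', b', c')" using \<open>a = q * a'\<close> \<open>b = q * b'\<close> \<open>c = q * c'\<close> by simp
  then show "(a, b, c) \<in> I" using qA by simp
qed

lemma inv_ex: "\<not> q dvd p \<Longrightarrow> \<exists>h. q dvd h * p - 1"
proof -
  assume np: "\<not> q dvd p"
  then have "\<not> (\<forall>x. pmul p x \<in> I)" using A_iff by simp
  then obtain i w where i: "i \<in> I" and e: "(1, 0, 0) = ons_add i (pmul p w)"
    using genr[OF max nOp, of p] by blast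
  obtain i0 i1 i2 where ii: "i = (i0, i1, i2)" by (cases i) auto
  obtain w0 w1 w2 where ww: "w = (w0, w1, w2)" by (cases w) auto
  have "1 = i0 + p * w0" using e unfolding ii ww by (simp del: ons_simps add: ons_add_def pmul_def)
  moreover have "q dvd i0" using i memI unfolding ii by simp
  ultimately have d: "q dvd - i0" by simp
  have "w0 * p - 1 = - i0" by (subst \<open>1 = i0 + p * w0\<close>) (simp add: algebra_simps)
  then have "q dvd w0 * p - 1" using d by simp
  then show ?thesis by blast
qed

lemma nonab: "ons_bracket (0, 1, 0) (0, 0, 1) \<notin> I"
  using memI not_dvd1 by simp

end

end



definition Nq :: "'a::field poly \<Rightarrow> 'a poly \<Rightarrow> 'a ons \<Rightarrow> 'a ons" where
  "Nq q p = pmul (p mod q)"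

definition repr :: "('a::field ons \<Rightarrow> 'a ons) \<Rightarrow> 'a poly" where
  "repr c = fst (c (1, 0, 0))"

definition Kq :: "'a::field poly \<Rightarrow> ('a ons \<Rightarrow> 'a ons) ring" where
  "Kq q = \<lparr>carrier = range (Nq q), monoid.mult = (\<lambda>c d. Nq q (repr c * repr d)),
     one = Nq q 1, zero = Nq q 0, add = (\<lambda>c d. Nq q (repr c + repr d))\<rparr>"

lemma Kq_simps:
  "carrier (Kq q) = range (Nq q)"
  "c \<otimes>\<^bsub>Kq q\<^esub> d = Nq q (repr c * repr d)"
  "c \<oplus>\<^bsub>Kq q\<^esub> d = Nq q (repr c + repr d)"
  "\<one>\<^bsub>Kq q\<^esub> = Nq q 1"
  "\<zero>\<^bsub>Kq q\<^esub> = Nq q 0"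
  by (simp_all add: Kq_def)

lemma repr_N: "repr (Nq q p) = p mod q"
  by (simp add: repr_def Nq_def)

lemma N_eq: "Nq q a = Nq q b \<longleftrightarrow> a mod q = b mod q"
proof
  assume "Nq q a = Nq q b"
  then have "repr (Nq q a) = repr (Nq q b)" by simp
  then show "a mod q = b mod q" by (simp add: repr_N)
qed (simp add: Nq_def)

lemma N_mod: "Nq q (p mod q) = Nq q p"
  by (simp add: N_eq)

lemma N_add: "Nq q a \<oplus>\<^bsub>Kq q\<^esub> Nq q b = Nq q (a + b)"
  by (simp add: Kq_simps repr_N N_eq mod_add_eq)

lemma N_mult: "Nq q a \<otimes>\<^bsub>Kq q\<^esub> Nq q b = Nq q (a * b)"
  by (simp add: Kq_simps repr_N N_eq mod_mult_eq)

lemma cring_K: "cring (Kq q)"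
proof (rule cringI)
  show "abelian_group (Kq q)"
  proof (rule abelian_groupI)
    fix x y assume "x \<in> carrier (Kq q)" "y \<in> carrier (Kq q)"
    then show "x \<oplus>\<^bsub>Kq q\<^esub> y \<in> carrier (Kq q)" by (auto simp: Kq_simps N_add)
  next
    show "\<zero>\<^bsub>Kq q\<^esub> \<in> carrier (Kq q)" by (simp add: Kq_simps)
  next
    fix x y z assume "x \<in> carrier (Kq q)" "y \<in> carrier (Kq q)" "z \<in> carrier (Kq q)"
    then show "x \<oplus>\<^bsub>Kq q\<^esub> y \<oplus>\<^bsub>Kq q\<^esub> z = x \<oplus>\<^bsub>Kq q\<^esub> (y \<oplus>\<^bsub>Kq q\<^esub> z)"
      by (auto simp: Kq_simps(1) N_add add.assoc)
  next
    fix x y assume "x \<in> carrier (Kq q)" "y \<in> carrier (Kq q)"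
    then show "x \<oplus>\<^bsub>Kq q\<^esub> y = y \<oplus>\<^bsub>Kq q\<^esub> x"
      by (auto simp: Kq_simps(1) N_add add.commute)
  next
    fix x assume "x \<in> carrier (Kq q)"
    then show "\<zero>\<^bsub>Kq q\<^esub> \<oplus>\<^bsub>Kq q\<^esub> x = x"
      by (auto simp: Kq_simps(1,5) N_add)
  next
    fix x assume "x \<in> carrier (Kq q)"
    then obtain a where "x = Nq q a" by (auto simp: Kq_simps)
    then have "Nq q (- a) \<oplus>\<^bsub>Kq q\<^esub> x = \<zero>\<^bsub>Kq q\<^esub>" by (simp add: N_add Kq_simps(5))
    then show "\<exists>y\<in>carrier (Kq q). y \<oplus>\<^bsub>Kq q\<^esub> x = \<zero>\<^bsub>Kq q\<^esub>" by (auto simp: Kq_simps(1))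
  qed
next
  show "comm_monoid (Kq q)"
  proof (rule comm_monoidI)
    fix x y assume "x \<in> carrier (Kq q)" "y \<in> carrier (Kq q)"
    then show "x \<otimes>\<^bsub>Kq q\<^esub> y \<in> carrier (Kq q)" by (auto simp: Kq_simps N_mult)
  next
    show "\<one>\<^bsub>Kq q\<^esub> \<in> carrier (Kq q)" by (simp add: Kq_simps)
  next
    fix x y z assume "x \<in> carrier (Kq q)" "y \<in> carrier (Kq q)" "z \<in> carrier (Kq q)"
    then show "x \<otimes>\<^bsub>Kq q\<^esub> y \<otimes>\<^bsub>Kq q\<^esub> z = x \<otimes>\<^bsub>Kq q\<^esub> (y \<otimes>\<^bsub>Kq q\<^esub> z)"
      by (auto simp: Kq_simps(1) N_mult mult.assoc)
  next
    fix x assume "x \<in> carrier (Kq q)"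
    then show "\<one>\<^bsub>Kq q\<^esub> \<otimes>\<^bsub>Kq q\<^esub> x = x"
      by (auto simp: Kq_simps(1,4) N_mult)
  next
    fix x y assume "x \<in> carrier (Kq q)" "y \<in> carrier (Kq q)"
    then show "x \<otimes>\<^bsub>Kq q\<^esub> y = y \<otimes>\<^bsub>Kq q\<^esub> x"
      by (auto simp: Kq_simps(1) N_mult mult.commute)
  qed
next
  fix x y z assume "x \<in> carrier (Kq q)" "y \<in> carrier (Kq q)" "z \<in> carrier (Kq q)"
  then show "(x \<oplus>\<^bsub>Kq q\<^esub> y) \<otimes>\<^bsub>Kq q\<^esub> z = x \<otimes>\<^bsub>Kq q\<^esub> z \<oplus>\<^bsub>Kq q\<^esub> y \<otimes>\<^bsub>Kq q\<^esub> z"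
    by (auto simp: Kq_simps(1) N_mult N_add distrib_right)
qed

lemma field_K:
  fixes q :: "'a::field poly"
  assumes nd1: "\<not> q dvd 1"
    and inv: "\<And>p. \<not> q dvd p \<Longrightarrow> \<exists>h. q dvd h * p - 1"
  shows "field (Kq q)"
proof (rule cring.cring_fieldI2[OF cring_K])
  show "\<zero>\<^bsub>Kq q\<^esub> \<noteq> \<one>\<^bsub>Kq q\<^esub>"
    using nd1 by (simp add: Kq_simps N_eq mod_eq_0_iff_dvd)
next
  fix a assume "a \<in> carrier (Kq q)" "a \<noteq> \<zero>\<^bsub>Kq q\<^esub>"
  then obtain p where ap: "a = Nq q p" and "Nq q p \<noteq> Nq q 0" by (auto simp: Kq_simps)
  then have "\<not> q dvd p" by (simp add: N_eq mod_eq_0_iff_dvd)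
  then obtain h where "q dvd h * p - 1" using inv by blast
  then have "(p * h) mod q = 1 mod q" by (simp add: mod_eq_dvd_iff mult.commute)
  then have "a \<otimes>\<^bsub>Kq q\<^esub> Nq q h = \<one>\<^bsub>Kq q\<^esub>" unfolding ap by (simp add: N_mult Kq_simps(4) N_eq)
  then show "\<exists>b\<in>carrier (Kq q). a \<otimes>\<^bsub>Kq q\<^esub> b = \<one>\<^bsub>Kq q\<^esub>" by (auto simp: Kq_simps(1))
qed

lemma type_field_simps:
  "carrier type_field = UNIV"
  "x \<otimes>\<^bsub>type_field\<^esub> y = x * y"
  "x \<oplus>\<^bsub>type_field\<^esub> y = x + y"
  "\<one>\<^bsub>type_field\<^esub> = 1"
  "\<zero>\<^bsub>type_field\<^esub> = 0"
  by (simp_all add: type_field_def)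

lemma field_type_field: "field (type_field :: 'a::field ring)"
proof -
  have cr: "cring (type_field :: 'a ring)"
  proof (rule cringI)
    show "abelian_group (type_field :: 'a ring)"
      by (rule abelian_groupI) (auto simp: type_field_simps add.assoc add.commute intro: exI[of _ "- x" for x])
    show "comm_monoid (type_field :: 'a ring)"
      by (rule comm_monoidI) (auto simp: type_field_simps mult.assoc mult.commute)
  qed (simp add: type_field_simps distrib_right)
  show ?thesis
  proof (rule cring.cring_fieldI2[OF cr])
    show "\<zero>\<^bsub>type_field\<^esub> \<noteq> (\<one>\<^bsub>type_field\<^esub> :: 'a)" by (simp add: type_field_simps)
  next
    fix a :: 'a assume "a \<noteq> \<zero>\<^bsub>type_field\<^esub>"
    then show "\<exists>b\<in>carrier type_field. a \<otimes>\<^bsub>type_field\<^esub> b = \<one>\<^bsub>type_field\<^esub>"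
      by (auto simp: type_field_simps intro!: exI[of _ "inverse a"])
  qed
qed


definition iq :: "'a::field poly \<Rightarrow> 'a \<Rightarrow> 'a ons \<Rightarrow> 'a ons" where
  "iq q a = Nq q [:a:]"

lemma iq_hom: "iq q \<in> ring_hom type_field (Kq q)"
  by (rule ring_hom_memI)
     (auto simp: iq_def type_field_simps Kq_simps(1,4) N_add N_mult N_eq one_pCons mult.commute)

lemma combine_N:
  assumes F: "field (Kq q)"
  shows "ring.combine (Kq q) (map (\<lambda>i. iq q (f i)) is) (map (\<lambda>i. Nq q (Polynomial.monom 1 i)) is)
       = Nq q (\<Sum>i\<leftarrow>is. Polynomial.monom (f i) i)"
proof -
  interpret F: field "Kq q" by (rule F)
  show ?thesis
  proof (induction "is")
    case Nil
    then show ?case by (simp add: Kq_simps)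
  next
    case (Cons i js)
    have "iq q (f i) \<otimes>\<^bsub>Kq q\<^esub> Nq q (Polynomial.monom 1 i) = Nq q (Polynomial.monom (f i) i)"
      by (simp add: iq_def N_mult smult_monom)
    then show ?case using Cons by (simp add: N_add)
  qed
qed


lemma sum_monoms_upt:
  fixes r :: "'a::field poly"
  assumes "degree r < n"
  shows "(\<Sum>i\<leftarrow>[0..<n]. Polynomial.monom (Polynomial.coeff r i) i) = r"
proof -
  have n: "n > 0" using assms by simp
  have "(\<Sum>i\<leftarrow>[0..<n]. Polynomial.monom (Polynomial.coeff r i) i)
      = (\<Sum>i\<in>{0..<n}. Polynomial.monom (Polynomial.coeff r i) i)"
    by (simp add: interv_sum_list_conv_sum_set_nat)
  also have "{0..<n} = {..n - 1}" using n by auto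
  also have "(\<Sum>i\<le>n - 1. Polynomial.monom (Polynomial.coeff r i) i) = r"
    by (rule poly_as_sum_of_monoms') (use assms in simp)
  finally show ?thesis .
qed

lemma smul_pmul: "ons_smul a x = pmul [:a:] x"
  by (cases x) simp

lemma build_K:
  fixes I :: "'a::field ons set" and q :: "'a poly"
  assumes max: "ons_maximal_ideal I" and qnz: "q \<noteq> 0" and nd1: "\<not> q dvd 1"
    and inv: "\<And>p. \<not> q dvd p \<Longrightarrow> \<exists>h. q dvd h * p - 1"
    and memI: "\<And>a b c. (a, b, c) \<in> I \<longleftrightarrow> q dvd a \<and> q dvd b \<and> q dvd c"
    and nonab: "ons_bracket x0 y0 \<notin> I"
  shows "quot_3dim_simple_over_finite_ext I"
proof -
  have F: "field (Kq q)" by (rule field_K[OF nd1 inv])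
  interpret F: field "Kq q" by (rule F)
  interpret T: field "type_field :: 'a ring" by (rule field_type_field)
  have hom: "iq q \<in> ring_hom type_field (Kq q)" by (rule iq_hom)
  have rhr: "ring_hom_ring type_field (Kq q) (iq q)"
    by (rule ring_hom_ringI2[OF T.is_ring F.is_ring hom])
  have sf0: "subfield (iq q ` carrier type_field) (Kq q)"
    by (rule ring_hom_ring.img_is_subfield(2)[OF rhr T.carrier_is_subfield F.one_not_zero])
  then have sf: "subfield (range (iq q)) (Kq q)" by (simp add: type_field_simps)
  define n where "n = degree q"
  have n: "n > 0"
  proof (rule ccontr)
    assume "\<not> n > 0"
    then have "degree q = 0" unfolding n_def by simp
    then have "is_unit q" using is_unit_iff_degree[OF qnz] by simp
    then show False using nd1 by simp
  qed
  define Us where "Us = map (\<lambda>i. Nq q (Polynomial.monom 1 i)) [0..<n]"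
  have Us: "set Us \<subseteq> carrier (Kq q)" unfolding Us_def by (auto simp: Kq_simps)
  have "carrier (Kq q) = F.Span (range (iq q)) Us"
  proof
    show "F.Span (range (iq q)) Us \<subseteq> carrier (Kq q)"
      by (rule F.Span_in_carrier[OF subfieldE(3)[OF sf] Us])
  next
    show "carrier (Kq q) \<subseteq> F.Span (range (iq q)) Us"
    proof
      fix x assume "x \<in> carrier (Kq q)"
      then obtain p where xp: "x = Nq q p" by (auto simp: Kq_simps)
      define r where "r = p mod q"
      have dr: "degree r < n"
        using degree_mod_less[OF qnz, of p] n unfolding r_def n_def by auto
      define Ks where "Ks = map (\<lambda>i. iq q (Polynomial.coeff r i)) [0..<n]"
      have "F.combine Ks Us = Nq q (\<Sum>i\<leftarrow>[0..<n]. Polynomial.monom (Polynomial.coeff r i) i)"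
        unfolding Ks_def Us_def by (rule combine_N[OF F])
      also have "\<dots> = x" using sum_monoms_upt[OF dr] unfolding xp r_def by (simp add: N_mod)
      finally have "x = F.combine Ks Us" by simp
      moreover have "set Ks \<subseteq> range (iq q)" unfolding Ks_def by auto
      ultimately show "x \<in> F.Span (range (iq q)) Us"
        unfolding F.Span_eq_combine_set[OF sf Us] by blast
    qed
  qed
  then have fd: "F.finite_dimension (range (iq q)) (carrier (Kq q))"
    using F.Span_finite_dimension[OF sf Us] by simp
  have Ipmul: "z \<in> I \<Longrightarrow> pmul r z \<in> I" for z r
    by (cases z) (auto simp: memI)
  have self: "ons_diff z z \<in> I" for z
    by (cases z) (simp add: memI)
  have pdiff: "ons_diff (pmul r x) (pmul s x) \<in> I" if "q dvd r - s" for r s x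
  proof -
    obtain a b c where x: "x = (a, b, c)" by (cases x)
    have "q dvd (r - s) * a" "q dvd (r - s) * b" "q dvd (r - s) * c" using that by simp_all
    then show ?thesis unfolding x by (simp add: memI left_diff_distrib)
  qed
  have pdiff': "ons_diff (pmul r x) (pmul s x) \<in> I" if "r mod q = s mod q" for r s x
    using pdiff that by (simp add: mod_eq_dvd_iff)
  have carrE: "\<exists>p. c = Nq q p" if "c \<in> carrier (Kq q)" for c
    using that by (auto simp: Kq_simps)
  have G1: "\<forall>c\<in>carrier (Kq q). \<forall>x y. ons_diff x y \<in> I \<longrightarrow> ons_diff (c x) (c y) \<in> I"
  proof (intro ballI allI impI)
    fix c x y assume "c \<in> carrier (Kq q)" "ons_diff x y \<in> I"
    then obtain p where c: "c = Nq q p" using carrE by blast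
    have "ons_diff (c x) (c y) = pmul (p mod q) (ons_diff x y)"
      unfolding c Nq_def by (cases x, cases y) (simp add: algebra_simps)
    then show "ons_diff (c x) (c y) \<in> I" using Ipmul \<open>ons_diff x y \<in> I\<close> by simp
  qed
  have G2: "\<forall>c\<in>carrier (Kq q). \<forall>x y. ons_diff (c (ons_add x y)) (ons_add (c x) (c y)) \<in> I"
  proof (intro ballI allI)
    fix c x y assume "c \<in> carrier (Kq q)"
    then obtain p where c: "c = Nq q p" using carrE by blast
    show "ons_diff (c (ons_add x y)) (ons_add (c x) (c y)) \<in> I"
      unfolding c Nq_def pmul_add by (rule self)
  qed
  have G3: "\<forall>c\<in>carrier (Kq q). \<forall>d\<in>carrier (Kq q). \<forall>x.
            ons_diff ((c \<oplus>\<^bsub>Kq q\<^esub> d) x) (ons_add (c x) (d x)) \<in> I"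
  proof (intro ballI allI)
    fix c d x assume "c \<in> carrier (Kq q)" "d \<in> carrier (Kq q)"
    then obtain a b where c: "c = Nq q a" and d: "d = Nq q b" using carrE by blast
    have e: "ons_add (c x) (d x) = pmul (a mod q + b mod q) x"
      unfolding c d Nq_def by (cases x) (simp add: algebra_simps)
    have "ons_diff (pmul ((a + b) mod q) x) (pmul (a mod q + b mod q) x) \<in> I"
      by (rule pdiff') (simp add: mod_add_eq)
    then show "ons_diff ((c \<oplus>\<^bsub>Kq q\<^esub> d) x) (ons_add (c x) (d x)) \<in> I"
      unfolding e unfolding c d N_add by (simp add: Nq_def)
  qed
  have G4: "\<forall>c\<in>carrier (Kq q). \<forall>d\<in>carrier (Kq q). \<forall>x.
            ons_diff ((c \<otimes>\<^bsub>Kq q\<^esub> d) x) (c (d x)) \<in> I"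
  proof (intro ballI allI)
    fix c d x assume "c \<in> carrier (Kq q)" "d \<in> carrier (Kq q)"
    then obtain a b where c: "c = Nq q a" and d: "d = Nq q b" using carrE by blast
    have e: "c (d x) = pmul (a mod q * (b mod q)) x"
      unfolding c d Nq_def by (simp add: pmul_pmul)
    have "ons_diff (pmul ((a * b) mod q) x) (pmul (a mod q * (b mod q)) x) \<in> I"
      by (rule pdiff') (simp add: mod_mult_eq)
    then show "ons_diff ((c \<otimes>\<^bsub>Kq q\<^esub> d) x) (c (d x)) \<in> I"
      unfolding e unfolding c d N_mult by (simp add: Nq_def)
  qed
  have G5: "\<forall>a x. ons_diff (iq q a x) (ons_smul a x) \<in> I"
  proof (intro allI)
    fix a x
    have "ons_diff (pmul ([:a:] mod q) x) (pmul [:a:] x) \<in> I" by (rule pdiff') simp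
    then show "ons_diff (iq q a x) (ons_smul a x) \<in> I" by (simp add: iq_def Nq_def smul_pmul)
  qed
  have G6: "\<forall>c\<in>carrier (Kq q). \<forall>x y. ons_diff (ons_bracket (c x) y) (c (ons_bracket x y)) \<in> I"
  proof (intro ballI allI)
    fix c x y assume "c \<in> carrier (Kq q)"
    then obtain p where c: "c = Nq q p" using carrE by blast
    have "ons_bracket (c x) y = c (ons_bracket x y)"
      unfolding c Nq_def by (simp add: pmul_br br_pmul_swap)
    then show "ons_diff (ons_bracket (c x) y) (c (ons_bracket x y)) \<in> I" using self by simp
  qed
  have G7: "\<forall>c\<in>carrier (Kq q). \<forall>x y. ons_diff (ons_bracket x (c y)) (c (ons_bracket x y)) \<in> I"
  proof (intro ballI allI)
    fix c x y assume "c \<in> carrier (Kq q)"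
    then obtain p where c: "c = Nq q p" using carrE by blast
    have "ons_bracket x (c y) = c (ons_bracket x y)"
      unfolding c Nq_def by (simp add: pmul_br)
    then show "ons_diff (ons_bracket x (c y)) (c (ons_bracket x y)) \<in> I" using self by simp
  qed
  have G8: "\<exists>e1 e2 e3.
           (\<forall>x. \<exists>c1\<in>carrier (Kq q). \<exists>c2\<in>carrier (Kq q). \<exists>c3\<in>carrier (Kq q).
               ons_diff x (ons_add (c1 e1) (ons_add (c2 e2) (c3 e3))) \<in> I)
         \<and> (\<forall>c1\<in>carrier (Kq q). \<forall>c2\<in>carrier (Kq q). \<forall>c3\<in>carrier (Kq q).
               ons_add (c1 e1) (ons_add (c2 e2) (c3 e3)) \<in> I
               \<longrightarrow> c1 = \<zero>\<^bsub>Kq q\<^esub> \<and> c2 = \<zero>\<^bsub>Kq q\<^esub> \<and> c3 = \<zero>\<^bsub>Kq q\<^esub>)"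
  proof -
  have P1: "\<forall>x. \<exists>c1\<in>carrier (Kq q). \<exists>c2\<in>carrier (Kq q). \<exists>c3\<in>carrier (Kq q).
               ons_diff x (ons_add (c1 (1, 0, 0)) (ons_add (c2 (0, 1, 0)) (c3 (0, 0, 1)))) \<in> I"
  proof
    fix x :: "'a ons"
    obtain a b c where x: "x = (a, b, c)" by (cases x)
    have dv: "q dvd u - u mod q" for u :: "'a poly"
      by (simp add: mod_eq_dvd_iff[symmetric])
    have D: "ons_diff x (ons_add (Nq q a (1, 0, 0)) (ons_add (Nq q b (0, 1, 0)) (Nq q c (0, 0, 1)))) \<in> I"
      unfolding x using dv[of a] dv[of b] dv[of c] by (simp add: Nq_def memI)
    show "\<exists>c1\<in>carrier (Kq q). \<exists>c2\<in>carrier (Kq q). \<exists>c3\<in>carrier (Kq q).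
               ons_diff x (ons_add (c1 (1, 0, 0)) (ons_add (c2 (0, 1, 0)) (c3 (0, 0, 1)))) \<in> I"
      by (rule bexI[where x="Nq q a"], rule bexI[where x="Nq q b"], rule bexI[where x="Nq q c"],
          rule D, simp_all add: Kq_simps)
  qed
  have P2: "\<forall>c1\<in>carrier (Kq q). \<forall>c2\<in>carrier (Kq q). \<forall>c3\<in>carrier (Kq q).
               ons_add (c1 (1, 0, 0)) (ons_add (c2 (0, 1, 0)) (c3 (0, 0, 1))) \<in> I
               \<longrightarrow> c1 = \<zero>\<^bsub>Kq q\<^esub> \<and> c2 = \<zero>\<^bsub>Kq q\<^esub> \<and> c3 = \<zero>\<^bsub>Kq q\<^esub>"
  proof (intro ballI impI)
    fix c1 c2 c3 assume m1: "c1 \<in> carrier (Kq q)" and m2: "c2 \<in> carrier (Kq q)"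
      and m3: "c3 \<in> carrier (Kq q)"
      and H: "ons_add (c1 (1, 0, 0)) (ons_add (c2 (0, 1, 0)) (c3 (0, 0, 1))) \<in> I"
    obtain a where c1: "c1 = Nq q a" using carrE[OF m1] by (elim exE)
    obtain b where c2: "c2 = Nq q b" using carrE[OF m2] by (elim exE)
    obtain c where c3: "c3 = Nq q c" using carrE[OF m3] by (elim exE)
    have "ons_add (c1 (1, 0, 0)) (ons_add (c2 (0, 1, 0)) (c3 (0, 0, 1))) = (a mod q, b mod q, c mod q)"
      unfolding c1 c2 c3 Nq_def by simp
    then have "(a mod q, b mod q, c mod q) \<in> I" using H by simp
    then have da: "q dvd a mod q" and db: "q dvd b mod q" and dc: "q dvd c mod q" unfolding memI by simp_all
    have "a mod q = 0" using da by (simp add: dvd_eq_mod_eq_0)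
    moreover have "b mod q = 0" using db by (simp add: dvd_eq_mod_eq_0)
    moreover have "c mod q = 0" using dc by (simp add: dvd_eq_mod_eq_0)
    ultimately show "c1 = \<zero>\<^bsub>Kq q\<^esub> \<and> c2 = \<zero>\<^bsub>Kq q\<^esub> \<and> c3 = \<zero>\<^bsub>Kq q\<^esub>"
      unfolding c1 c2 c3 Kq_simps by (simp add: N_eq)
  qed
  show ?thesis by (rule exI, rule exI, rule exI, rule conjI[OF P1 P2])
  qed
  have G9: "\<exists>x y. ons_bracket x y \<notin> I" using nonab by blast
  have G10: "\<forall>J. ons_ideal J \<and> I \<subseteq> J \<and> (\<forall>c\<in>carrier (Kq q). \<forall>x\<in>J. c x \<in> J)
             \<longrightarrow> J = I \<or> J = UNIV"
    using max unfolding ons_maximal_ideal_def by blast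
  show ?thesis
    unfolding quot_3dim_simple_over_finite_ext_def
    apply (rule exI[of _ "Kq q"], rule exI[of _ "iq q"], rule exI[of _ "\<lambda>c x. c x"])
    apply (intro conjI)
    apply (fact F)
    apply (fact hom)
    apply (fact sf)
    apply (fact fd)
    apply (fact G1)
    apply (fact G2)
    apply (fact G3)
    apply (fact G4)
    apply (fact G5)
    apply (fact G6)
    apply (fact G7)
    apply (fact G8)
    apply (fact G9)
    apply (fact G10)
    done
qed


theorem corollary4p7:
  fixes I :: "'a::field ons set"
  assumes "(2::'a) \<noteq> 0"
    and "ons_maximal_ideal I"
  shows "quot_one_dim I \<or> quot_3dim_simple_over_finite_ext I"
proof (cases "Op \<subseteq> I")
  case True
  then show ?thesis using caseA[OF assms(2)] by simp
next
  case False
  note max = assms(2)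
  obtain f where f: "f \<noteq> 0 \<and> (\<forall>x. pmul f x \<in> I)" using existsA[OF max False] by blast
  obtain q where q: "q \<noteq> 0 \<and> (\<forall>x. pmul q x \<in> I)"
    and qm: "\<forall>y. y \<noteq> 0 \<and> (\<forall>x. pmul y x \<in> I) \<longrightarrow> degree q \<le> degree y"
    using ex_has_least_nat[of "\<lambda>g. g \<noteq> 0 \<and> (\<forall>x. pmul g x \<in> I)" f degree] f by blast
  have qnz: "q \<noteq> 0" and qA: "\<forall>x. pmul q x \<in> I" using q by auto
  have qmin: "\<And>g. g \<noteq> 0 \<Longrightarrow> (\<forall>x. pmul g x \<in> I) \<Longrightarrow> degree q \<le> degree g"
    using qm by blast
  have "quot_3dim_simple_over_finite_ext I"
    by (rule build_K[OF max qnz not_dvd1[OF max False qnz qA qmin] inv_ex[OF max False qnz qA qmin]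
          memI[OF max False qnz qA qmin] nonab[OF max False qnz qA qmin]])
  then show ?thesis by simp
qed

end
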